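(* In the poset $\textsf{Star}(n)$: the identity permutation $(1)(2)\cdots(n)$ is the unique maximal element; the minimal elements are exactly the $n$-cycles, so there are $(n-1)!$ of them; and $\textsf{Star}(n)$ is graded, every maximal chain having exactly $n$ elements.
   Context: $\mathfrak{S}_n$ is the symmetric group on $[n]$, products taken right to left; cycles include fixed points. For a pivot $k\in[n]$, a star factorization of $\pi$ is $\pi=g_1\cdots g_r$ with each $g_i$ a transposition $(k\ i)$, $i\neq k$; it is transitive if all $(k\ i)$, $i\in[n]\setminus\{k\}$, occur; $\star_k(\pi)$ is the set of transitive star factorizations of $\pi$ of minimum length $n+m-2$ ($m$ = number of cycles of $\pi$). $\sigma\preceq_k\pi$ means some $\gamma\in\star_k(\sigma)$ is a not necessarily contiguous subword of some $\delta\in\star_k(\pi)$. This relation does not depend on $k$; it is denoted $\preceq$, and $\textsf{Star}(n)$ is the resulting poset on $\mathfrak{S}_n$. *)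

theory Defs
  imports "HOL-Combinatorics.Permutations" "HOL-Combinatorics.Transposition" "HOL-Library.Sublist"
begin

text \<open>A star factorization with pivot k is encoded by the word of indices [i1,...,ir],
  standing for the product (k i1)(k i2)...(k ir), composed right to left
  (the rightmost transposition is applied first).\<close>

definition star_prod :: "nat \<Rightarrow> nat list \<Rightarrow> (nat \<Rightarrow> nat)" where
  "star_prod k w = foldr (\<lambda>i acc. transpose k i \<circ> acc) w id"

definition cycle_of :: "(nat \<Rightarrow> nat) \<Rightarrow> nat \<Rightarrow> nat set" where
  "cycle_of p x = {(p ^^ j) x | j. True}"

definition num_cycles :: "nat \<Rightarrow> (nat \<Rightarrow> nat) \<Rightarrow> nat" where
  "num_cycles n p = card (cycle_of p ` {1..n})"

text \<open>Transitive star factorizations of pi (pivot k) of minimum length n + m - 2.\<close>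
definition star_facts :: "nat \<Rightarrow> nat \<Rightarrow> (nat \<Rightarrow> nat) \<Rightarrow> nat list set" where
  "star_facts n k p = {w. set w \<subseteq> {1..n} - {k} \<and> set w = {1..n} - {k}
      \<and> star_prod k w = p \<and> length w = n + num_cycles n p - 2}"

definition star_le :: "nat \<Rightarrow> nat \<Rightarrow> (nat \<Rightarrow> nat) \<Rightarrow> (nat \<Rightarrow> nat) \<Rightarrow> bool" where
  "star_le n k s p = (\<exists>g\<in>star_facts n k s. \<exists>d\<in>star_facts n k p. subseq g d)"

definition sym_group :: "nat \<Rightarrow> (nat \<Rightarrow> nat) set" where
  "sym_group n = {p. p permutes {1..n}}"

definition is_maximal :: "nat \<Rightarrow> nat \<Rightarrow> (nat \<Rightarrow> nat) \<Rightarrow> bool" where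
  "is_maximal n k x = (x \<in> sym_group n \<and> (\<forall>y\<in>sym_group n. star_le n k x y \<longrightarrow> y = x))"

definition is_minimal :: "nat \<Rightarrow> nat \<Rightarrow> (nat \<Rightarrow> nat) \<Rightarrow> bool" where
  "is_minimal n k x = (x \<in> sym_group n \<and> (\<forall>y\<in>sym_group n. star_le n k y x \<longrightarrow> y = x))"

definition is_full_cycle :: "nat \<Rightarrow> (nat \<Rightarrow> nat) \<Rightarrow> bool" where
  "is_full_cycle n p = (p permutes {1..n} \<and> num_cycles n p = 1)"

definition is_chain :: "nat \<Rightarrow> nat \<Rightarrow> (nat \<Rightarrow> nat) set \<Rightarrow> bool" where
  "is_chain n k C = (C \<subseteq> sym_group n \<and> (\<forall>x\<in>C. \<forall>y\<in>C. star_le n k x y \<or> star_le n k y x))"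

definition is_maximal_chain :: "nat \<Rightarrow> nat \<Rightarrow> (nat \<Rightarrow> nat) set \<Rightarrow> bool" where
  "is_maximal_chain n k C = (is_chain n k C \<and> (\<forall>D. is_chain n k D \<and> C \<subseteq> D \<longrightarrow> D = C))"

end

theory Submission imports Defs "HOL-Combinatorics.Orbits" "HOL-Combinatorics.Multiset_Permutations" begin

lemma star_prod_Nil[simp]: "star_prod k [] = id"
  by (simp add: star_prod_def)

lemma star_prod_Cons[simp]: "star_prod k (i # w) = transpose k i \<circ> star_prod k w"
  by (simp add: star_prod_def)

lemma star_prod_append: "star_prod k (u @ v) = star_prod k u \<circ> star_prod k v"
  by (induction u) auto

lemma star_prod_permutes: "k \<in> S \<Longrightarrow> set w \<subseteq> S \<Longrightarrow> star_prod k w permutes S"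
proof (induction w)
  case Nil show ?case by (simp only: star_prod_Nil permutes_id)
next
  case (Cons i w)
  then have "star_prod k w permutes S" "transpose k i permutes S" by (auto intro: permutes_swap_id)
  then show ?case by (simp only: star_prod_Cons permutes_compose)
qed

lemma star_prod_fix: "z \<notin> set w \<Longrightarrow> z \<noteq> k \<Longrightarrow> star_prod k w z = z"
  by (induction w) (auto simp: transpose_def)

definition nc :: "nat set \<Rightarrow> (nat \<Rightarrow> nat) \<Rightarrow> nat" where
  "nc S p = card (orbit p ` S)"

lemma cycle_of_orbit: assumes "finite S" "p permutes S" shows "cycle_of p x = orbit p x"
  using orbit_altdef_permutation[OF permutes_imp_permutation[OF assms]] by (simp add: cycle_of_def)

lemma num_cycles_nc: "p permutes {1..n} \<Longrightarrow> num_cycles n p = nc {1..n} p"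
  unfolding num_cycles_def nc_def
  by (metis (no_types, lifting) cycle_of_orbit finite_atLeastAtMost image_cong)

lemma orbit_eq_of_mem:
  assumes "permutation p" "y \<in> orbit p x" shows "orbit p y = orbit p x"
proof
  show "orbit p y \<subseteq> orbit p x"
  proof fix z assume "z \<in> orbit p y" then show "z \<in> orbit p x" using assms(2) by (rule orbit_trans) qed
  have "x \<in> orbit p y"
    using orbit_swap[OF permutation_self_in_orbit[OF assms(1)] assms(2)] .
  then show "orbit p x \<subseteq> orbit p y"
  proof - assume h: "x \<in> orbit p y"
    show ?thesis proof fix z assume "z \<in> orbit p x" then show "z \<in> orbit p y" using h by (rule orbit_trans) qed
  qed
qed

lemma orbit_common:
  assumes "a \<notin> orbit x z" "b \<notin> orbit x z" "permutation x"
  shows "orbit (transpose a b \<circ> x) z = orbit x z"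
proof (rule orbit_cong)
  show "z \<in> orbit x z" using assms(3) by (rule permutation_self_in_orbit)
  fix s assume "s \<in> orbit x z"
  then have "x s \<in> orbit x z" by (simp add: orbit_eqI(2))
  then have "x s \<noteq> a" "x s \<noteq> b" using assms by auto
  then show "(transpose a b \<circ> x) s = x s" by simp
qed

lemma U_sub:
  assumes "finite S" "x permutes S"
  shows "{Q \<in> orbit x ` S. a \<notin> Q \<and> b \<notin> Q} \<subseteq> {Q \<in> orbit (transpose a b \<circ> x) ` S. a \<notin> Q \<and> b \<notin> Q}"
proof
  fix Q assume "Q \<in> {Q \<in> orbit x ` S. a \<notin> Q \<and> b \<notin> Q}"
  then obtain z where z: "z \<in> S" "Q = orbit x z" "a \<notin> orbit x z" "b \<notin> orbit x z" by blast
  then have "orbit (transpose a b \<circ> x) z = orbit x z"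
    using orbit_common[OF z(3,4) permutes_imp_permutation[OF assms]] by simp
  then have "Q \<in> orbit (transpose a b \<circ> x) ` S" using z by (metis imageI)
  then show "Q \<in> {Q \<in> orbit (transpose a b \<circ> x) ` S. a \<notin> Q \<and> b \<notin> Q}" using z by simp
qed

lemma U_eq:
  assumes "finite S" "x permutes S" "a \<in> S" "b \<in> S"
  shows "{Q \<in> orbit (transpose a b \<circ> x) ` S. a \<notin> Q \<and> b \<notin> Q} = {Q \<in> orbit x ` S. a \<notin> Q \<and> b \<notin> Q}"
proof
  show "{Q \<in> orbit x ` S. a \<notin> Q \<and> b \<notin> Q} \<subseteq> {Q \<in> orbit (transpose a b \<circ> x) ` S. a \<notin> Q \<and> b \<notin> Q}"
    using U_sub[OF assms(1,2)] .
  have y: "transpose a b \<circ> x permutes S"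
    using assms by (simp add: permutes_compose permutes_swap_id)
  have e: "transpose a b \<circ> (transpose a b \<circ> x) = x" by (simp add: fun_eq_iff)
  show "{Q \<in> orbit (transpose a b \<circ> x) ` S. a \<notin> Q \<and> b \<notin> Q} \<subseteq> {Q \<in> orbit x ` S. a \<notin> Q \<and> b \<notin> Q}"
    using U_sub[OF assms(1) y, of a b] unfolding e .
qed

lemma T_sub:
  assumes "finite S" "x permutes S"
  shows "{Q \<in> orbit x ` S. a \<in> Q \<or> b \<in> Q} \<subseteq> {orbit x a, orbit x b}"
proof
  fix Q assume "Q \<in> {Q \<in> orbit x ` S. a \<in> Q \<or> b \<in> Q}"
  then obtain z where "Q = orbit x z" "a \<in> orbit x z \<or> b \<in> orbit x z" by auto
  then show "Q \<in> {orbit x a, orbit x b}"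
    using orbit_eq_of_mem[OF permutes_imp_permutation[OF assms]] by blast
qed

lemma T_ne:
  assumes "finite S" "x permutes S" "a \<in> S"
  shows "orbit x a \<in> {Q \<in> orbit x ` S. a \<in> Q \<or> b \<in> Q}"
proof -
  have "a \<in> orbit x a" using permutation_self_in_orbit[OF permutes_imp_permutation[OF assms(1,2)]] .
  moreover have "orbit x a \<in> orbit x ` S" using assms(3) by (rule imageI)
  ultimately show ?thesis by simp
qed

lemma T_card1:
  assumes "finite S" "x permutes S" "a \<in> S"
  shows "1 \<le> card {Q \<in> orbit x ` S. a \<in> Q \<or> b \<in> Q}"
proof -
  have "finite {Q \<in> orbit x ` S. a \<in> Q \<or> b \<in> Q}" using assms(1) by simp
  moreover have "{Q \<in> orbit x ` S. a \<in> Q \<or> b \<in> Q} \<noteq> {}" using T_ne[OF assms, of b] by (metis empty_iff)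
  ultimately show ?thesis by (simp add: Suc_leI card_gt_0_iff)
qed

lemma nc_split:
  assumes "finite S"
  shows "nc S x = card {Q \<in> orbit x ` S. a \<notin> Q \<and> b \<notin> Q} + card {Q \<in> orbit x ` S. a \<in> Q \<or> b \<in> Q}"
proof -
  have e: "orbit x ` S = {Q \<in> orbit x ` S. a \<notin> Q \<and> b \<notin> Q} \<union> {Q \<in> orbit x ` S. a \<in> Q \<or> b \<in> Q}" by blast
  have "card ({Q \<in> orbit x ` S. a \<notin> Q \<and> b \<notin> Q} \<union> {Q \<in> orbit x ` S. a \<in> Q \<or> b \<in> Q})
     = card {Q \<in> orbit x ` S. a \<notin> Q \<and> b \<notin> Q} + card {Q \<in> orbit x ` S. a \<in> Q \<or> b \<in> Q}"
    by (rule card_Un_disjoint) (use assms in auto)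
  then show ?thesis unfolding nc_def using e by simp
qed

lemma nc_M1:
  assumes "finite S" "x permutes S" "a \<in> S" "b \<in> S"
  shows "nc S (transpose a b \<circ> x) \<le> nc S x + 1"
proof -
  let ?y = "transpose a b \<circ> x"
  have y: "?y permutes S"
    using assms by (simp add: permutes_compose permutes_swap_id)
  have "card {Q \<in> orbit ?y ` S. a \<in> Q \<or> b \<in> Q} \<le> card {orbit ?y a, orbit ?y b}"
    using card_mono[OF _ T_sub[OF assms(1) y]] by simp
  also have "\<dots> \<le> 2" by (simp add: card_insert_le_m1)
  finally have 1: "card {Q \<in> orbit ?y ` S. a \<in> Q \<or> b \<in> Q} \<le> 2" .
  have 2: "1 \<le> card {Q \<in> orbit x ` S. a \<in> Q \<or> b \<in> Q}"
    using T_card1[OF assms(1,2,3)] .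
  have 3: "card {Q \<in> orbit ?y ` S. a \<notin> Q \<and> b \<notin> Q} = card {Q \<in> orbit x ` S. a \<notin> Q \<and> b \<notin> Q}"
    using U_eq[OF assms] by simp
  show ?thesis using nc_split[OF assms(1), of ?y a b] nc_split[OF assms(1), of x a b] 1 2 3
    by linarith
qed

lemma merge_orbit:
  assumes "permutation x" "b \<notin> orbit x a"
  shows "b \<in> orbit (transpose a b \<circ> x) a"
proof -
  let ?y = "transpose a b \<circ> x"
  let ?r = "funpow_dist1 x a a"
  have aa: "a \<in> orbit x a" using assms(1) by (rule permutation_self_in_orbit)
  have r: "(x ^^ ?r) a = a" using funpow_dist1_prop[OF aa] .
  have rpos: "0 < ?r" by simp
  have eq: "i < ?r \<Longrightarrow> (?y ^^ i) a = (x ^^ i) a" for i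
  proof (induction i)
    case 0 then show ?case by simp
  next
    case (Suc i)
    have ne: "(x ^^ Suc i) a \<noteq> a" using funpow_dist1_least[of "Suc i" x a a] Suc.prems by simp
    have "(x ^^ Suc i) a \<in> orbit x a" using funpow_in_orbit[OF aa] .
    then have nb: "(x ^^ Suc i) a \<noteq> b" using assms(2) by auto
    have ih: "(?y ^^ i) a = (x ^^ i) a" using Suc.IH Suc.prems by (meson Suc_lessD)
    have "(?y ^^ Suc i) a = ?y ((?y ^^ i) a)" by (simp only: funpow.simps comp_apply)
    also have "\<dots> = ?y ((x ^^ i) a)" using ih by (simp only:)
    also have "\<dots> = transpose a b ((x ^^ Suc i) a)" by simp
    also have "\<dots> = (x ^^ Suc i) a" using ne nb by simp
    finally show ?case .
  qed
  obtain r' where r': "?r = Suc r'" using rpos by (cases ?r) auto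
  have "(?y ^^ ?r) a = ?y ((?y ^^ r') a)" using r' by (simp only: funpow.simps comp_apply)
  also have "\<dots> = ?y ((x ^^ r') a)" using eq[of r'] r' by simp
  also have "\<dots> = transpose a b ((x ^^ ?r) a)" using r' by simp
  also have "\<dots> = b" using r by simp
  finally have "(?y ^^ ?r) a = b" .
  moreover have "permutation ?y"
    using assms(1) by (simp add: permutation_compose permutation_swap_id)
  moreover have "a \<in> orbit ?y a" using calculation(2) by (rule permutation_self_in_orbit)
  ultimately show ?thesis using funpow_in_orbit by metis
qed

lemma nc_M2:
  assumes "finite S" "x permutes S" "a \<in> S" "b \<in> S" "b \<notin> orbit x a"
  shows "nc S (transpose a b \<circ> x) + 1 = nc S x"
proof -
  let ?y = "transpose a b \<circ> x"
  have y: "?y permutes S"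
    using assms by (simp add: permutes_compose permutes_swap_id)
  have px: "permutation x" using permutes_imp_permutation[OF assms(1,2)] .
  have py: "permutation ?y" using permutes_imp_permutation[OF assms(1) y] .
  have "b \<in> orbit ?y a" using merge_orbit[OF px assms(5)] .
  then have oeq: "orbit ?y b = orbit ?y a" using orbit_eq_of_mem[OF py] by blast
  have "card {Q \<in> orbit ?y ` S. a \<in> Q \<or> b \<in> Q} \<le> card {orbit ?y a, orbit ?y b}"
    using card_mono[OF _ T_sub[OF assms(1) y]] by simp
  also have "\<dots> = 1" using oeq by simp
  finally have 1: "card {Q \<in> orbit ?y ` S. a \<in> Q \<or> b \<in> Q} \<le> 1" .
  have "{orbit x a, orbit x b} \<subseteq> {Q \<in> orbit x ` S. a \<in> Q \<or> b \<in> Q}"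
    using assms permutation_self_in_orbit[OF px] by auto
  moreover have "orbit x a \<noteq> orbit x b" using assms(5) permutation_self_in_orbit[OF px, of b] by auto
  ultimately have 2: "2 \<le> card {Q \<in> orbit x ` S. a \<in> Q \<or> b \<in> Q}"
  proof -
    assume h: "{orbit x a, orbit x b} \<subseteq> {Q \<in> orbit x ` S. a \<in> Q \<or> b \<in> Q}" "orbit x a \<noteq> orbit x b"
    have "card {orbit x a, orbit x b} = 2" using h(2) by simp
    moreover have "finite {Q \<in> orbit x ` S. a \<in> Q \<or> b \<in> Q}" using assms(1) by simp
    ultimately show ?thesis using card_mono[OF _ h(1)] by simp
  qed
  have 3: "1 \<le> card {Q \<in> orbit ?y ` S. a \<in> Q \<or> b \<in> Q}"
    using T_card1[OF assms(1) y assms(3)] .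
  have 4: "card {Q \<in> orbit x ` S. a \<in> Q \<or> b \<in> Q} \<le> 2"
  proof -
    have "card {Q \<in> orbit x ` S. a \<in> Q \<or> b \<in> Q} \<le> card {orbit x a, orbit x b}"
      using card_mono[OF _ T_sub[OF assms(1,2)]] by simp
    also have "\<dots> \<le> 2" by (simp add: card_insert_le_m1)
    finally show ?thesis .
  qed
  have 5: "card {Q \<in> orbit ?y ` S. a \<notin> Q \<and> b \<notin> Q} = card {Q \<in> orbit x ` S. a \<notin> Q \<and> b \<notin> Q}"
    using U_eq[OF assms(1-4)] by simp
  show ?thesis using nc_split[OF assms(1), of ?y a b] nc_split[OF assms(1), of x a b] 1 2 3 4 5
    by linarith
qed

lemma num_cycles_ge1: "1 \<le> n \<Longrightarrow> 1 \<le> num_cycles n p"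
  unfolding num_cycles_def by (simp add: Suc_leI card_gt_0_iff)

lemma num_cycles_le: "num_cycles n p \<le> n"
  unfolding num_cycles_def using card_image_le[of "{1..n}" "cycle_of p"] by simp

lemma facts_permutes:
  assumes "k \<in> {1..n}" "w \<in> star_facts n k p" shows "p permutes {1..n}"
  using assms star_prod_permutes[of k "{1..n}" w] unfolding star_facts_def by auto

lemma facts_len: "w \<in> star_facts n k p \<Longrightarrow> length w = n + num_cycles n p - 2"
  unfolding star_facts_def by auto

lemma facts_set: "w \<in> star_facts n k p \<Longrightarrow> set w = {1..n} - {k}"
  unfolding star_facts_def by auto

lemma facts_prod: "w \<in> star_facts n k p \<Longrightarrow> star_prod k w = p"
  unfolding star_facts_def by auto

lemma factsI: "set w = {1..n} - {k} \<Longrightarrow> star_prod k w = p \<Longrightarrow> length w = n + num_cycles n p - 2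
  \<Longrightarrow> w \<in> star_facts n k p"
  unfolding star_facts_def by auto

lemma prefix_to:
  assumes "c0 = k \<or> c0 \<in> set d"
  shows "\<exists>u v. d = u @ v \<and> star_prod k u k = c0"
proof (cases "c0 = k")
  case True then show ?thesis by (intro exI[of _ "[]"] exI[of _ d]) auto
next
  case False
  then have "c0 \<in> set d" using assms by auto
  then obtain u0 v where d: "d = u0 @ c0 # v" and nu: "c0 \<notin> set u0" by (metis split_list_first)
  have "star_prod k (u0 @ [c0]) k = c0"
    using star_prod_fix[OF nu False] by (simp add: star_prod_append)
  then show ?thesis using d by (intro exI[of _ "u0 @ [c0]"] exI[of _ v]) auto
qed

lemma SIL:
  assumes k: "k \<in> {1..n}" and d: "d \<in> star_facts n k x"
    and ab: "a \<in> {1..n}" "b \<in> {1..n}" "a \<noteq> b"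
    and m: "num_cycles n (transpose a b \<circ> x) = num_cycles n x + 1"
  shows "\<exists>e \<in> star_facts n k (transpose a b \<circ> x). subseq d e"
proof -
  have sd: "set d = {1..n} - {k}" using facts_set[OF d] .
  have "a = k \<or> a \<in> set d" using sd ab by auto
  then obtain u v where uv: "d = u @ v" and Uk: "star_prod k u k = a" using prefix_to by blast
  let ?U = "star_prod k u"
  have Uperm: "?U permutes {1..n}" using star_prod_permutes[OF k, of u] sd uv by auto
  then have bijU: "bij ?U" by (rule permutes_bij)
  define c where "c = inv ?U b"
  have Uc: "?U c = b" unfolding c_def using surj_f_inv_f[OF bij_is_surj[OF bijU]] .
  have cS: "c \<in> {1..n}" unfolding c_def using permutes_in_image[OF permutes_inv[OF Uperm]] ab(2) by blast
  have ck: "c \<noteq> k" using Uc Uk ab(3) by auto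
  define e where "e = u @ c # v"
  have "star_prod k e = ?U \<circ> transpose k c \<circ> star_prod k v"
    unfolding e_def by (simp add: star_prod_append comp_assoc)
  also have "?U \<circ> transpose k c = transpose a b \<circ> ?U"
  proof -
    have ia: "inv ?U a = k" using Uk inv_f_f[OF bij_is_inj[OF bijU], of k] by simp
    have ib: "inv ?U b = c" unfolding c_def ..
    show ?thesis using transpose_comp_eq[OF bijU, of a b] unfolding ia ib by simp
  qed
  also have "transpose a b \<circ> ?U \<circ> star_prod k v = transpose a b \<circ> x"
    using facts_prod[OF d] uv by (simp add: star_prod_append comp_assoc)
  finally have pe: "star_prod k e = transpose a b \<circ> x" .
  have cd: "c \<in> set d" using sd cS ck by simp
  have "set e = set d" using cd unfolding e_def uv by auto
  then have se: "set e = {1..n} - {k}" using sd by simp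
  have n1: "1 \<le> n" using k by simp
  have "1 \<le> num_cycles n x" using num_cycles_ge1[OF n1] .
  moreover have "length e = length d + 1" unfolding e_def uv by simp
  ultimately have le: "length e = n + num_cycles n (transpose a b \<circ> x) - 2"
    using facts_len[OF d] m n1 by linarith
  have "subseq v (c # v)" by (rule list_emb_Cons) (rule list_emb_refl, simp)
  then have "subseq d e" unfolding e_def uv by (simp add: subseq_append')
  then show ?thesis using factsI[OF se pe le] by blast
qed

lemma M1n:
  assumes "x permutes {1..n}" "a \<in> {1..n}" "b \<in> {1..n}"
  shows "num_cycles n (transpose a b \<circ> x) \<le> num_cycles n x + 1"
proof -
  have "transpose a b \<circ> x permutes {1..n}"
    using assms by (simp add: permutes_compose permutes_swap_id)
  then show ?thesis using nc_M1[OF _ assms] num_cycles_nc assms(1) by simp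
qed

lemma M2n:
  assumes "x permutes {1..n}" "a \<in> {1..n}" "b \<in> {1..n}" "b \<notin> cycle_of x a"
  shows "num_cycles n (transpose a b \<circ> x) + 1 = num_cycles n x"
proof -
  have "transpose a b \<circ> x permutes {1..n}"
    using assms by (simp add: permutes_compose permutes_swap_id)
  moreover have "b \<notin> orbit x a" using assms(4) cycle_of_orbit[OF _ assms(1)] by simp
  ultimately show ?thesis using nc_M2[OF _ assms(1-3)] num_cycles_nc assms(1) by simp
qed

fun tprod :: "(nat \<times> nat) list \<Rightarrow> nat \<Rightarrow> nat" where
  "tprod [] = id"
| "tprod ((a,b) # ts) = transpose a b \<circ> tprod ts"

lemma transpose_conj_pt:
  "transpose (transpose k x a) (transpose k x b) (transpose k x w) = transpose k x (transpose a b w)"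
proof -
  let ?g = "transpose k x"
  have "transpose (?g a) (?g b) \<circ> ?g = ?g \<circ> transpose (inv ?g (?g a)) (inv ?g (?g b))"
    by (rule transpose_comp_eq) simp
  then have "transpose (?g a) (?g b) \<circ> ?g = ?g \<circ> transpose a b" by simp
  then show ?thesis by (metis comp_apply)
qed

lemma tprod_conj:
  "tprod (map (\<lambda>(a,b). (transpose k x a, transpose k x b)) ts) z = transpose k x (tprod ts (transpose k x z))"
proof (induction ts arbitrary: z)
  case Nil then show ?case by simp
next
  case (Cons p ts)
  obtain a b where p: "p = (a,b)" by fastforce
  show ?case using Cons p by (simp add: transpose_conj_pt)
qed

lemma tprod_permutes: "x permutes S \<Longrightarrow> \<forall>p\<in>set ts. fst p \<in> S \<and> snd p \<in> S \<Longrightarrow> tprod ts \<circ> x permutes S"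
proof (induction ts)
  case Nil then show ?case by simp
next
  case (Cons p ts)
  obtain a b where p: "p = (a,b)" by fastforce
  have "tprod ts \<circ> x permutes S" by (rule Cons.IH[OF Cons.prems(1)]) (use Cons.prems(2) in auto)
  moreover have ab: "a \<in> S" "b \<in> S" using Cons.prems p by auto
  ultimately have "transpose a b \<circ> (tprod ts \<circ> x) permutes S"
    using permutes_compose permutes_swap_id[OF ab] by metis
  moreover have "transpose a b \<circ> (tprod ts \<circ> x) = tprod (p # ts) \<circ> x" using p by (simp add: fun_eq_iff)
  ultimately show ?case by (simp only:)
qed

lemma TL:
  assumes "subseq xs ys"
  shows "set ys \<subseteq> S \<Longrightarrow> k \<in> S \<Longrightarrow> \<exists>ts. length ts = length ys - length xs \<and> (\<forall>p\<in>set ts. fst p \<in> S \<and> snd p \<in> S)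
     \<and> (\<forall>z. star_prod k ys z = tprod ts (star_prod k xs z))"
  using assms
proof (induction rule: list_emb.induct)
  case (list_emb_Nil ys)
  have "star_prod k ys z = tprod (map (\<lambda>i. (k,i)) ys) z" for z by (induction ys) auto
  then show ?case using list_emb_Nil by (intro exI[of _ "map (\<lambda>i. (k,i)) ys"]) auto
next
  case (list_emb_Cons xs ys y)
  then obtain ts where ts: "length ts = length ys - length xs" "\<forall>p\<in>set ts. fst p \<in> S \<and> snd p \<in> S"
     "\<forall>z. star_prod k ys z = tprod ts (star_prod k xs z)" by auto
  have "length xs \<le> length ys" using list_emb_Cons(1) by (rule list_emb_length)
  then show ?case using ts list_emb_Cons(3,4)
    by (intro exI[of _ "(k,y) # ts"]) auto
next
  case (list_emb_Cons2 x y xs ys)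
  then have xy: "x = y" by simp
  from list_emb_Cons2 obtain ts where ts: "length ts = length ys - length xs" "\<forall>p\<in>set ts. fst p \<in> S \<and> snd p \<in> S"
     "\<forall>z. star_prod k ys z = tprod ts (star_prod k xs z)" by auto
  let ?g = "transpose k x"
  let ?ts = "map (\<lambda>(a,b). (?g a, ?g b)) ts"
  have yS: "x \<in> S" using list_emb_Cons2(4) xy by simp
  have e: "star_prod k (y # ys) z = tprod ?ts (star_prod k (x # xs) z)" for z
    using ts(3) xy by (simp add: tprod_conj)
  have "\<forall>p\<in>set ?ts. fst p \<in> S \<and> snd p \<in> S"
  proof
    fix p assume "p \<in> set ?ts"
    then obtain a b where "(a,b) \<in> set ts" "p = (?g a, ?g b)" by auto
    then show "fst p \<in> S \<and> snd p \<in> S" using ts(2) yS list_emb_Cons2(5)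
      by (auto simp: transpose_def)
  qed
  then show ?case using e ts(1) by (intro exI[of _ ?ts]) simp
qed

lemma tprod_Cons_comp: "tprod ((a,b) # ts) \<circ> x = transpose a b \<circ> (tprod ts \<circ> x)"
  by (simp add: fun_eq_iff)

lemma M1iter:
  assumes "x permutes {1..n}" "\<forall>p\<in>set ts. fst p \<in> {1..n} \<and> snd p \<in> {1..n}"
  shows "num_cycles n (tprod ts \<circ> x) \<le> num_cycles n x + length ts"
  using assms(2)
proof (induction ts)
  case Nil then show ?case by (simp add: id_def)
next
  case (Cons p ts)
  obtain a b where p: "p = (a,b)" by fastforce
  have ab: "a \<in> {1..n}" "b \<in> {1..n}" using Cons.prems p by auto
  have y: "tprod ts \<circ> x permutes {1..n}" using tprod_permutes[OF assms(1)] Cons.prems by simp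
  have "num_cycles n (tprod (p # ts) \<circ> x) = num_cycles n (transpose a b \<circ> (tprod ts \<circ> x))"
    unfolding p tprod_Cons_comp ..
  also have "\<dots> \<le> num_cycles n (tprod ts \<circ> x) + 1" using M1n[OF y ab] .
  also have "\<dots> \<le> num_cycles n x + length (p # ts)" using Cons by (simp add: comp_def)
  finally show ?case .
qed

lemma climb:
  assumes k: "k \<in> {1..n}" and d: "d \<in> star_facts n k x"
  shows "\<forall>p\<in>set ts. fst p \<in> {1..n} \<and> snd p \<in> {1..n} \<Longrightarrow> num_cycles n (tprod ts \<circ> x) = num_cycles n x + length ts
    \<Longrightarrow> \<exists>e \<in> star_facts n k (tprod ts \<circ> x). subseq d e"
proof (induction ts)
  case Nil
  have "tprod [] \<circ> x = x" by (simp add: fun_eq_iff)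
  then show ?case using d by (metis subseq_order.order_refl)
next
  case (Cons p ts)
  obtain a b where p: "p = (a,b)" by fastforce
  have ab: "a \<in> {1..n}" "b \<in> {1..n}" using Cons.prems p by auto
  have xp: "x permutes {1..n}" using facts_permutes[OF k d] .
  have vts: "\<forall>p\<in>set ts. fst p \<in> {1..n} \<and> snd p \<in> {1..n}" using Cons.prems by simp
  let ?y = "tprod ts \<circ> x"
  have y: "?y permutes {1..n}" using tprod_permutes[OF xp vts] .
  have eq: "tprod (p # ts) \<circ> x = transpose a b \<circ> ?y" unfolding p tprod_Cons_comp ..
  have m1: "num_cycles n (transpose a b \<circ> ?y) \<le> num_cycles n ?y + 1" using M1n[OF y ab] .
  have m2: "num_cycles n ?y \<le> num_cycles n x + length ts" using M1iter[OF xp vts] .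
  have m3: "num_cycles n (transpose a b \<circ> ?y) = num_cycles n x + length ts + 1"
    using Cons.prems(2) unfolding eq by (simp add: comp_def)
  have my: "num_cycles n ?y = num_cycles n x + length ts" using m1 m2 m3 by linarith
  have myt: "num_cycles n (transpose a b \<circ> ?y) = num_cycles n ?y + 1" using my m3 by linarith
  obtain e' where e': "e' \<in> star_facts n k ?y" "subseq d e'" using Cons.IH[OF vts my] by blast
  have "a \<noteq> b"
  proof
    assume "a = b"
    then have "transpose a b \<circ> ?y = ?y" by simp
    then show False using myt by simp
  qed
  then obtain e where e: "e \<in> star_facts n k (transpose a b \<circ> ?y)" "subseq e' e"
    using SIL[OF k e'(1) ab _ myt] by blast
  have "subseq d e" using e'(2) e(2) by (rule subseq_order.trans)
  then show ?case using e(1) unfolding eq by blast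
qed

lemma rank_le:
  assumes k: "k \<in> {1..n}" and "star_le n k x y"
  shows "num_cycles n x \<le> num_cycles n y"
proof -
  obtain g d where g: "g \<in> star_facts n k x" and d: "d \<in> star_facts n k y" and gd: "subseq g d"
    using assms(2) unfolding star_le_def by blast
  have "length g \<le> length d" using gd by (rule list_emb_length)
  moreover have "1 \<le> num_cycles n x" "1 \<le> n" "1 \<le> num_cycles n y" using num_cycles_ge1 k by auto
  ultimately show ?thesis using facts_len[OF g] facts_len[OF d] by linarith
qed

lemma rank_eq:
  assumes k: "k \<in> {1..n}" and "star_le n k x y" and "num_cycles n x = num_cycles n y"
  shows "x = y"
proof -
  obtain g d where g: "g \<in> star_facts n k x" and d: "d \<in> star_facts n k y" and gd: "subseq g d"
    using assms(2) unfolding star_le_def by blast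
  have "length g = length d" using facts_len[OF g] facts_len[OF d] assms(3) by simp
  then have "g = d" using gd subseq_same_length by blast
  then show ?thesis using facts_prod[OF g] facts_prod[OF d] by simp
qed

lemma subseq_tprod:
  assumes k: "k \<in> {1..n}" and g: "g \<in> star_facts n k x" and e: "e \<in> star_facts n k y" and ge: "subseq g e"
  shows "\<exists>ts. length ts = num_cycles n y - num_cycles n x \<and> (\<forall>p\<in>set ts. fst p \<in> {1..n} \<and> snd p \<in> {1..n})
     \<and> y = tprod ts \<circ> x"
proof -
  have "set e \<subseteq> {1..n}" using facts_set[OF e] by auto
  then obtain ts where ts: "length ts = length e - length g" "\<forall>p\<in>set ts. fst p \<in> {1..n} \<and> snd p \<in> {1..n}"
     "\<forall>z. star_prod k e z = tprod ts (star_prod k g z)" using TL[OF ge _ k] by blast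
  have "y = tprod ts \<circ> x" using ts(3) facts_prod[OF g] facts_prod[OF e] by (auto simp: fun_eq_iff)
  moreover have "length ts = num_cycles n y - num_cycles n x"
    using ts(1) facts_len[OF g] facts_len[OF e] num_cycles_ge1[of n x] k by auto
  ultimately show ?thesis using ts(2) by blast
qed

lemma star_le_trans:
  assumes k: "k \<in> {1..n}" and sp: "star_le n k s p" and pq: "star_le n k p q"
  shows "star_le n k s q"
proof -
  obtain g d where g: "g \<in> star_facts n k s" and d: "d \<in> star_facts n k p" and gd: "subseq g d"
    using sp unfolding star_le_def by blast
  obtain d' e where d': "d' \<in> star_facts n k p" and e: "e \<in> star_facts n k q" and de: "subseq d' e"
    using pq unfolding star_le_def by blast
  obtain ts where ts: "length ts = num_cycles n q - num_cycles n p" "\<forall>p\<in>set ts. fst p \<in> {1..n} \<and> snd p \<in> {1..n}"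
     "q = tprod ts \<circ> p" using subseq_tprod[OF k d' e de] by blast
  have "num_cycles n p \<le> num_cycles n q" using rank_le[OF k pq] .
  then have "num_cycles n (tprod ts \<circ> p) = num_cycles n p + length ts" using ts by simp
  then obtain e'' where "e'' \<in> star_facts n k (tprod ts \<circ> p)" "subseq d e''"
    using climb[OF k d ts(2)] by blast
  then show ?thesis unfolding star_le_def using g gd ts(3) subseq_order.trans by blast
qed

lemma interp:
  assumes k: "k \<in> {1..n}" and xy: "star_le n k x y" and m: "num_cycles n x + 2 \<le> num_cycles n y"
  shows "\<exists>z. z \<in> sym_group n \<and> star_le n k x z \<and> star_le n k z y \<and> num_cycles n z + 1 = num_cycles n y"
proof -
  obtain g e where g: "g \<in> star_facts n k x" and e: "e \<in> star_facts n k y" and ge: "subseq g e"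
    using xy unfolding star_le_def by blast
  obtain ts where ts: "length ts = num_cycles n y - num_cycles n x" "\<forall>p\<in>set ts. fst p \<in> {1..n} \<and> snd p \<in> {1..n}"
     "y = tprod ts \<circ> x" using subseq_tprod[OF k g e ge] by blast
  then obtain p ts' where pts: "ts = p # ts'" using m by (cases ts) auto
  obtain a b where p: "p = (a,b)" by fastforce
  have ab: "a \<in> {1..n}" "b \<in> {1..n}" using ts(2) pts p by auto
  have vts: "\<forall>p\<in>set ts'. fst p \<in> {1..n} \<and> snd p \<in> {1..n}" using ts(2) pts by simp
  have xp: "x permutes {1..n}" using facts_permutes[OF k g] .
  let ?z = "tprod ts' \<circ> x"
  have zp: "?z permutes {1..n}" using tprod_permutes[OF xp vts] .
  have yz: "y = transpose a b \<circ> ?z" using ts(3) unfolding pts p tprod_Cons_comp .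
  have m1: "num_cycles n y \<le> num_cycles n ?z + 1" using M1n[OF zp ab] yz by simp
  have m2: "num_cycles n ?z \<le> num_cycles n x + length ts'" using M1iter[OF xp vts] .
  have mz: "num_cycles n ?z = num_cycles n x + length ts'" using m1 m2 ts(1) pts m by simp
  obtain e' where e': "e' \<in> star_facts n k ?z" "subseq g e'" using climb[OF k g vts mz] by blast
  have v1: "\<forall>q\<in>set [(a,b)]. fst q \<in> {1..n} \<and> snd q \<in> {1..n}" using ab by simp
  have yz2: "tprod [(a,b)] \<circ> ?z = y" using yz by (simp add: fun_eq_iff)
  have "num_cycles n (tprod [(a,b)] \<circ> ?z) = num_cycles n ?z + length [(a,b)]"
    unfolding yz2 using mz ts(1) pts m by simp
  then obtain e'' where "e'' \<in> star_facts n k y" "subseq e' e''" using climb[OF k e'(1) v1] yz2 by auto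
  then have "star_le n k ?z y" unfolding star_le_def using e' by blast
  moreover have "star_le n k x ?z" unfolding star_le_def using e' g by blast
  moreover have "?z \<in> sym_group n" using zp by (simp add: sym_group_def)
  moreover have "num_cycles n ?z + 1 = num_cycles n y" using mz ts(1) pts m by simp
  ultimately show ?thesis by blast
qed

lemma F1: "distinct w \<Longrightarrow> k \<notin> set w \<Longrightarrow> star_prod k w k = (if w = [] then k else last w)"
proof (induction w)
  case Nil then show ?case by simp
next
  case (Cons a w)
  show ?case
  proof (cases "w = []")
    case True then show ?thesis by simp
  next
    case False
    then have "last w \<in> set w" by simp
    then have "last w \<noteq> a" "last w \<noteq> k" using Cons.prems by auto
    then show ?thesis using Cons False by simp
  qed
qed

lemma F2: "distinct w \<Longrightarrow> k \<notin> set w \<Longrightarrow> i < length w \<Longrightarrow> star_prod k w (w ! i) = (if i = 0 then k else w ! (i - 1))"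
proof (induction w arbitrary: i)
  case Nil then show ?case by simp
next
  case (Cons a w)
  show ?case
  proof (cases i)
    case 0
    have "star_prod k w a = a" using Cons.prems by (intro star_prod_fix) auto
    then show ?thesis using 0 by simp
  next
    case (Suc j)
    then have j: "j < length w" using Cons.prems by simp
    have ih: "star_prod k w (w ! j) = (if j = 0 then k else w ! (j - 1))" using Cons j by simp
    show ?thesis
    proof (cases "j = 0")
      case True then show ?thesis using ih Suc by simp
    next
      case False
      then have "w ! (j - 1) \<in> set w" using j by simp
      then have "w ! (j - 1) \<noteq> a" "w ! (j - 1) \<noteq> k" using Cons.prems by auto
      then show ?thesis using ih Suc False by (simp add: nth_Cons')
    qed
  qed
qed

lemma orbit_all:
  assumes "distinct w" "k \<notin> set w" "permutation (star_prod k w)"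
  shows "z \<in> set w \<Longrightarrow> z \<in> orbit (star_prod k w) k"
proof -
  let ?p = "star_prod k w"
  let ?r = "length w"
  have step: "j < ?r \<Longrightarrow> w ! (?r - 1 - j) \<in> orbit ?p k" for j
  proof (induction j)
    case 0
    then have "w \<noteq> []" by auto
    then have "?p k = w ! (?r - 1)" using F1[OF assms(1,2)] by (simp add: last_conv_nth)
    then show ?case by (simp add: orbit_eqI(1))
  next
    case (Suc j)
    then have ih: "w ! (?r - 1 - j) \<in> orbit ?p k" by simp
    have "?p (w ! (?r - 1 - j)) = w ! (?r - 1 - j - 1)"
      using F2[OF assms(1,2), of "?r - 1 - j"] Suc.prems by simp
    then have "w ! (?r - 1 - j - 1) \<in> orbit ?p k" using ih by (metis orbit_eqI(2))
    moreover have "?r - 1 - j - 1 = ?r - 1 - Suc j" by simp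
    ultimately show ?case by simp
  qed
  assume "z \<in> set w"
  then obtain i where i: "i < ?r" "z = w ! i" by (metis in_set_conv_nth)
  then have "?r - 1 - (?r - 1 - i) = i" by simp
  then show ?thesis using step[of "?r - 1 - i"] i by simp
qed

lemma distinct_full:
  assumes k: "k \<in> {1..n}" and w: "w \<in> permutations_of_set ({1..n} - {k})"
  shows "is_full_cycle n (star_prod k w)"
proof -
  let ?p = "star_prod k w"
  have sw1: "set w = {1..n} - {k}" using permutations_of_setD(1)[OF w] .
  have sw2: "distinct w" using permutations_of_setD(2)[OF w] .
  have kw: "k \<notin> set w" using sw1 by blast
  have "set w \<subseteq> {1..n}" using sw1 by blast
  then have pp: "?p permutes {1..n}" using star_prod_permutes[OF k] by blast
  have perm: "permutation ?p" using permutes_imp_permutation[OF _ pp] by simp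
  have all: "cycle_of ?p z = cycle_of ?p k" if z: "z \<in> {1..n}" for z
  proof -
    have "z \<in> orbit ?p k"
    proof (cases "z = k")
      case True then show ?thesis using permutation_self_in_orbit[OF perm] by simp
    next
      case False then have "z \<in> set w" using sw1 z by blast
      then show ?thesis using orbit_all[OF sw2 kw perm] by blast
    qed
    then have "orbit ?p z = orbit ?p k" using orbit_eq_of_mem[OF perm] by blast
    then show "cycle_of ?p z = cycle_of ?p k" using cycle_of_orbit[OF _ pp] by simp
  qed
  have "cycle_of ?p ` {1..n} = {cycle_of ?p k}"
  proof
    show "cycle_of ?p ` {1..n} \<subseteq> {cycle_of ?p k}" using all by blast
    show "{cycle_of ?p k} \<subseteq> cycle_of ?p ` {1..n}" using k by blast
  qed
  then have "num_cycles n ?p = 1" unfolding num_cycles_def by simp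
  then show ?thesis unfolding is_full_cycle_def using pp by simp
qed

lemma distinct_inj:
  assumes "distinct w" "k \<notin> set w" "distinct v" "k \<notin> set v" "length w = length v"
    and eq: "star_prod k w = star_prod k v"
  shows "w = v"
proof -
  let ?p = "star_prod k w"
  let ?r = "length w"
  have step: "j < ?r \<Longrightarrow> w ! (?r - 1 - j) = v ! (?r - 1 - j)" for j
  proof (induction j)
    case 0
    then have "w \<noteq> []" "v \<noteq> []" using assms(5) by auto
    then have "last w = last v" using F1[OF assms(1,2)] F1[OF assms(3,4)] eq by simp
    then show ?case using \<open>w \<noteq> []\<close> \<open>v \<noteq> []\<close> assms(5) by (simp add: last_conv_nth)
  next
    case (Suc j)
    then have ih: "w ! (?r - 1 - j) = v ! (?r - 1 - j)" by simp
    have a: "?p (w ! (?r - 1 - j)) = w ! (?r - 1 - j - 1)"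
      using F2[OF assms(1,2), of "?r - 1 - j"] Suc.prems by simp
    have b: "star_prod k v (v ! (?r - 1 - j)) = v ! (?r - 1 - j - 1)"
      using F2[OF assms(3,4), of "?r - 1 - j"] Suc.prems assms(5) by simp
    have "w ! (?r - 1 - j - 1) = v ! (?r - 1 - j - 1)" using a b ih eq by simp
    moreover have "?r - 1 - j - 1 = ?r - 1 - Suc j" by simp
    ultimately show ?case by simp
  qed
  show ?thesis
  proof (rule nth_equalityI)
    show "length w = length v" by fact
    fix i assume "i < length w"
    then have "?r - 1 - (?r - 1 - i) = i" by simp
    then show "w ! i = v ! i" using step[of "?r - 1 - i"] \<open>i < length w\<close> by simp
  qed
qed

lemma full_surj:
  assumes k: "k \<in> {1..n}" and fc: "is_full_cycle n c"
  shows "\<exists>w \<in> permutations_of_set ({1..n} - {k}). star_prod k w = c"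
proof -
  have cp: "c permutes {1..n}" using fc unfolding is_full_cycle_def by simp
  have m1: "card (cycle_of c ` {1..n}) = 1" using fc unfolding is_full_cycle_def num_cycles_def by simp
  have perm: "permutation c" using permutes_imp_permutation[OF _ cp] by simp
  have kk: "k \<in> orbit c k" using permutation_self_in_orbit[OF perm] .
  have oS: "orbit c k = {1..n}"
  proof
    show "orbit c k \<subseteq> {1..n}" using permutes_orbit_subset[OF cp k] .
    show "{1..n} \<subseteq> orbit c k"
    proof
      fix z assume z: "z \<in> {1..n}"
      obtain Q where Q: "cycle_of c ` {1..n} = {Q}" using m1 by (metis card_1_singletonE)
      have "cycle_of c z = Q" "cycle_of c k = Q" using Q z k by blast+
      moreover have "z \<in> cycle_of c z" unfolding cycle_of_def by (metis (mono_tags, lifting) funpow_0 mem_Collect_eq)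
      ultimately have "z \<in> cycle_of c k" by simp
      then show "z \<in> orbit c k" using cycle_of_orbit[OF _ cp] by simp
    qed
  qed
  define f where "f j = (c ^^ j) k" for j
  define r where "r = funpow_dist1 c k k"
  have oimg: "orbit c k = f ` {0..<r}" unfolding f_def r_def using orbit_conv_funpow_dist1[OF kk] .
  have finj: "inj_on f {0..<r}" unfolding f_def r_def using inj_on_funpow_dist1[OF kk] .
  have "card {1..n} = card {0..<r}" using card_image[OF finj] oimg oS by simp
  then have rn: "r = n" by simp
  have "(c ^^ r) k = k" unfolding r_def by (rule funpow_dist1_prop[OF kk])
  then have fn: "f n = k" unfolding f_def using rn by simp
  have fS: "f ` {0..<n} = {1..n}" using oimg oS rn by simp
  have finj': "inj_on f {0..<n}" using finj rn by simp
  have fsuc: "c (f j) = f (Suc j)" for j unfolding f_def by simp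
  define w where "w = map (\<lambda>i. f (n - i)) [1..<n]"
  have lw: "length w = n - 1" unfolding w_def by simp
  have wn: "j < n - 1 \<Longrightarrow> w ! j = f (n - 1 - j)" for j unfolding w_def by simp
  have fne: "f j \<noteq> k" if "1 \<le> j" "j < n" for j
  proof
    assume "f j = k"
    then have "f j = f 0" unfolding f_def by simp
    moreover have "j \<in> {0..<n}" "0 \<in> {0..<n}" using that by auto
    ultimately have "j = 0" using inj_onD[OF finj'] by blast
    then show False using that by simp
  qed
  have setw: "set w = {1..n} - {k}"
  proof
    show "set w \<subseteq> {1..n} - {k}"
    proof
      fix z assume "z \<in> set w"
      then obtain i where i: "i \<in> {1..<n}" "z = f (n - i)" unfolding w_def by auto
      have "f (n - i) \<in> {1..n}" using fS i(1) by auto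
      moreover have "f (n - i) \<noteq> k"
      proof (rule fne)
        show "1 \<le> n - i" "n - i < n" using i(1) by auto
      qed
      ultimately show "z \<in> {1..n} - {k}" using i by simp
    qed
    show "{1..n} - {k} \<subseteq> set w"
    proof
      fix z assume z: "z \<in> {1..n} - {k}"
      then obtain j where j: "j \<in> {0..<n}" "z = f j" using fS by (metis DiffD1 imageE)
      have "j \<noteq> 0"
      proof
        assume "j = 0" then have "z = k" using j unfolding f_def by simp
        then show False using z by simp
      qed
      then have "n - j \<in> {1..<n}" "f (n - (n - j)) = z" using j by auto
      then show "z \<in> set w" unfolding w_def by (metis image_eqI set_map set_upt)
    qed
  qed
  have dw: "distinct w" unfolding w_def
  proof (subst distinct_map, intro conjI)
    show "distinct [1..<n]" by simp
    show "inj_on (\<lambda>i. f (n - i)) (set [1..<n])"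
    proof (rule inj_onI)
      fix i j assume ij: "i \<in> set [1..<n]" "j \<in> set [1..<n]" "f (n - i) = f (n - j)"
      then have "n - i = n - j" using finj' by (auto simp: inj_on_eq_iff)
      then show "i = j" using ij by auto
    qed
  qed
  have kw: "k \<notin> set w" using setw by blast
  have "star_prod k w z = c z" for z
  proof (cases "z \<in> set w")
    case True
    then obtain j where j: "j < n - 1" "z = w ! j" using lw by (metis in_set_conv_nth)
    have lhs: "star_prod k w z = (if j = 0 then k else w ! (j - 1))" using F2[OF dw kw, of j] j lw by simp
    have "c z = f (Suc (n - 1 - j))" using j wn fsuc by simp
    also have "Suc (n - 1 - j) = n - j" using j by simp
    finally have rhs: "c z = f (n - j)" .
    show ?thesis
    proof (cases "j = 0")
      case True then show ?thesis using lhs rhs fn by simp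
    next
      case False
      then have "w ! (j - 1) = f (n - 1 - (j - 1))" using wn j by simp
      moreover have "n - 1 - (j - 1) = n - j" using False j by simp
      ultimately show ?thesis using lhs rhs False by simp
    qed
  next
    case False
    show ?thesis
    proof (cases "z = k")
      case True
      show ?thesis
      proof (cases "n = 1")
        case True
        then have "w = []" using lw by simp
        moreover have "c k = f 1" using fsuc[of 0] unfolding f_def by simp
        ultimately show ?thesis using \<open>z = k\<close> True fn by simp
      next
        case False
        then have n2: "2 \<le> n" using k by simp
        then have "w \<noteq> []" using lw by auto
        then have "star_prod k w k = w ! (n - 2)" using F1[OF dw kw] lw by (simp add: last_conv_nth numeral_2_eq_2)
        also have "\<dots> = f 1" using wn[of "n - 2"] n2 by simp
        also have "\<dots> = c k" using fsuc[of 0] unfolding f_def by simp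
        finally show ?thesis using \<open>z = k\<close> by simp
      qed
    next
      case zk: False
      then have "z \<notin> {1..n}" using False setw by blast
      then have "c z = z" using cp by (simp add: permutes_not_in)
      then show ?thesis using star_prod_fix[OF False zk] by simp
    qed
  qed
  then have "star_prod k w = c" by (simp add: fun_eq_iff)
  then show ?thesis using setw dw by blast
qed

lemma tt_cancel: "transpose a b \<circ> (transpose a b \<circ> x) = x"
  by (simp add: fun_eq_iff)

lemma full_facts:
  assumes k: "k \<in> {1..n}" and fc: "is_full_cycle n c"
  shows "\<exists>w. w \<in> star_facts n k c"
proof -
  obtain w where w: "w \<in> permutations_of_set ({1..n} - {k})" "star_prod k w = c"
    using full_surj[OF k fc] by blast
  have sw: "set w = {1..n} - {k}" "distinct w" using permutations_of_setD[OF w(1)] by auto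
  have "length w = card ({1..n} - {k})" using distinct_card[OF sw(2)] sw(1) by simp
  also have "\<dots> = n - 1" using k by simp
  finally have "length w = n + num_cycles n c - 2" using fc unfolding is_full_cycle_def by simp
  then show ?thesis using factsI[OF sw(1) w(2)] by blast
qed

lemma exist_below:
  assumes k: "k \<in> {1..n}"
  shows "x \<in> sym_group n \<Longrightarrow> \<exists>c g d. is_full_cycle n c \<and> g \<in> star_facts n k c \<and> d \<in> star_facts n k x \<and> subseq g d"
proof (induction "num_cycles n x" arbitrary: x rule: less_induct)
  case less
  have xp: "x permutes {1..n}" using less.prems by (simp add: sym_group_def)
  have n1: "1 \<le> n" using k by simp
  show ?case
  proof (cases "num_cycles n x = 1")
    case True
    then have fc: "is_full_cycle n x" using xp by (simp add: is_full_cycle_def)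
    then obtain w where "w \<in> star_facts n k x" using full_facts[OF k] by blast
    then show ?thesis using fc by (metis subseq_order.order_refl)
  next
    case False
    then have m2: "2 \<le> num_cycles n x" using num_cycles_ge1[OF n1, of x] by simp
    have "\<exists>a\<in>{1..n}. cycle_of x a \<noteq> cycle_of x k"
    proof (rule ccontr)
      assume "\<not> ?thesis"
      then have "cycle_of x ` {1..n} \<subseteq> {cycle_of x k}" by blast
      then have "card (cycle_of x ` {1..n}) \<le> card {cycle_of x k}" by (intro card_mono) auto
      then have "card (cycle_of x ` {1..n}) \<le> 1" by simp
      then show False using m2 unfolding num_cycles_def by simp
    qed
    then obtain a where a: "a \<in> {1..n}" "cycle_of x a \<noteq> cycle_of x k" by blast
    have nb: "k \<notin> cycle_of x a"
    proof
      assume "k \<in> cycle_of x a"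
      then have "orbit x k = orbit x a"
        using orbit_eq_of_mem[OF permutes_imp_permutation[OF _ xp]] cycle_of_orbit[OF _ xp] by simp
      then show False using a(2) cycle_of_orbit[OF _ xp] by simp
    qed
    have ak: "a \<noteq> k" using a(2) by blast
    let ?y = "transpose a k \<circ> x"
    have m: "num_cycles n ?y + 1 = num_cycles n x" using M2n[OF xp a(1) k nb] .
    have yp: "?y permutes {1..n}" using xp a(1) k by (simp add: permutes_compose permutes_swap_id)
    then have "?y \<in> sym_group n" by (simp add: sym_group_def)
    then obtain c g d' where cgd: "is_full_cycle n c" "g \<in> star_facts n k c" "d' \<in> star_facts n k ?y" "subseq g d'"
      using less.hyps m by (metis less_add_one)
    have m': "num_cycles n (transpose a k \<circ> ?y) = num_cycles n ?y + 1" unfolding tt_cancel using m by simp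
    obtain e where e: "e \<in> star_facts n k (transpose a k \<circ> ?y)" "subseq d' e"
      using SIL[OF k cgd(3) a(1) k ak m'] by blast
    have "subseq g e" using cgd(4) e(2) by (rule subseq_order.trans)
    moreover have "e \<in> star_facts n k x" using e(1) unfolding tt_cancel .
    ultimately show ?thesis using cgd(1,2) by blast
  qed
qed

lemma below_id:
  assumes k: "k \<in> {1..n}"
  shows "d \<in> star_facts n k x \<Longrightarrow> \<exists>f \<in> star_facts n k id. subseq d f"
proof (induction "n - num_cycles n x" arbitrary: x d rule: less_induct)
  case less
  have xp: "x permutes {1..n}" using facts_permutes[OF k less.prems] .
  show ?case
  proof (cases "x = id")
    case True then show ?thesis using less.prems by (metis subseq_order.order_refl)
  next
    case False
    have "\<exists>a\<in>{1..n}. x a \<noteq> a"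
    proof (rule ccontr)
      assume "\<not> ?thesis"
      then have "x z = z" for z using xp by (metis permutes_not_in)
      then show False using False by (simp add: fun_eq_iff)
    qed
    then obtain a where a: "a \<in> {1..n}" "x a \<noteq> a" by blast
    let ?b = "x a"
    have b: "?b \<in> {1..n}" using permutes_in_image[OF xp] a(1) by simp
    let ?y = "transpose a ?b \<circ> x"
    have yp: "?y permutes {1..n}" using xp a(1) b by (simp add: permutes_compose permutes_swap_id)
    have ya: "?y a = a" by simp
    have "(?y ^^ j) a = a" for j by (induction j) (simp_all add: ya)
    then have "cycle_of ?y a = {a}" unfolding cycle_of_def by auto
    then have nb: "?b \<notin> cycle_of ?y a" using a(2) by simp
    have "num_cycles n (transpose a ?b \<circ> ?y) + 1 = num_cycles n ?y" using M2n[OF yp a(1) b nb] .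
    then have "num_cycles n x + 1 = num_cycles n ?y" unfolding tt_cancel .
    then have m: "num_cycles n (transpose a ?b \<circ> x) = num_cycles n x + 1" by simp
    obtain e where e: "e \<in> star_facts n k ?y" "subseq d e" using SIL[OF k less.prems a(1) b a(2)[symmetric] m] by blast
    have "num_cycles n ?y \<le> n" by (rule num_cycles_le)
    then have "n - num_cycles n ?y < n - num_cycles n x" using m by simp
    then obtain f where "f \<in> star_facts n k id" "subseq e f" using less.hyps e(1) by blast
    then show ?thesis using e(2) subseq_order.trans by blast
  qed
qed

lemma refl_l: "star_le n k x y \<Longrightarrow> star_le n k x x"
  unfolding star_le_def using subseq_order.order_refl by blast

lemma refl_r: "star_le n k x y \<Longrightarrow> star_le n k y y"
  unfolding star_le_def using subseq_order.order_refl by blast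

lemma le_id:
  assumes k: "k \<in> {1..n}" and x: "x \<in> sym_group n"
  shows "star_le n k x id"
proof -
  obtain c g d where "d \<in> star_facts n k x" using exist_below[OF k x] by blast
  then obtain f where "f \<in> star_facts n k id" "subseq d f" using below_id[OF k] by blast
  then show ?thesis unfolding star_le_def using \<open>d \<in> star_facts n k x\<close> by blast
qed

lemma num_cycles_id: "num_cycles n id = n"
proof -
  have "cycle_of id z = {z}" for z unfolding cycle_of_def by auto
  then have "cycle_of id ` {1..n} = (\<lambda>z. {z}) ` {1..n}" by simp
  moreover have "inj_on (\<lambda>z. {z}) {1..n}" by (simp add: inj_on_def)
  ultimately show ?thesis unfolding num_cycles_def by (simp add: card_image)
qed

lemma sym_id: "id \<in> sym_group n"
  by (simp add: sym_group_def)

lemma chain_le: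
  assumes k: "k \<in> {1..n}" and C: "is_chain n k C" and xy: "x \<in> C" "y \<in> C"
    and m: "num_cycles n x \<le> num_cycles n y"
  shows "star_le n k x y"
proof -
  have "star_le n k x y \<or> star_le n k y x" using C xy unfolding is_chain_def by blast
  then show ?thesis
  proof
    assume yx: "star_le n k y x"
    then have "num_cycles n y \<le> num_cycles n x" by (rule rank_le[OF k])
    then have "y = x" using rank_eq[OF k yx] m by simp
    then show ?thesis using yx by simp
  qed
qed

lemma chain_inj:
  assumes k: "k \<in> {1..n}" and C: "is_chain n k C"
  shows "inj_on (num_cycles n) C"
proof (rule inj_onI)
  fix x y assume xy: "x \<in> C" "y \<in> C" "num_cycles n x = num_cycles n y"
  then have "star_le n k x y" using chain_le[OF k C] by simp
  then show "x = y" using rank_eq[OF k] xy(3) by blast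
qed

lemma max_chain_card:
  assumes k: "k \<in> {1..n}" and mc: "is_maximal_chain n k C"
  shows "card C = n"
proof -
  let ?m = "num_cycles n"
  have C: "is_chain n k C" using mc unfolding is_maximal_chain_def by blast
  have max: "\<And>D. is_chain n k D \<Longrightarrow> C \<subseteq> D \<Longrightarrow> D = C" using mc unfolding is_maximal_chain_def by blast
  have Csym: "C \<subseteq> sym_group n" using C unfolding is_chain_def by blast
  have fin: "finite C"
  proof -
    have "sym_group n = {p. p permutes {1..n}}" by (simp add: sym_group_def)
    then have "finite (sym_group n)" using finite_permutations[of "{1..n}"] by simp
    then show ?thesis using Csym finite_subset by blast
  qed
  have n1: "1 \<le> n" using k by simp
  have ins: "z \<in> C" if z: "z \<in> sym_group n" "star_le n k z z" "\<forall>c\<in>C. star_le n k c z \<or> star_le n k z c" for z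
  proof -
    have "is_chain n k (insert z C)"
      unfolding is_chain_def
    proof (intro conjI ballI)
      show "insert z C \<subseteq> sym_group n" using z(1) Csym by blast
      fix x y assume "x \<in> insert z C" "y \<in> insert z C"
      then consider "x = z" "y = z" | "x = z" "y \<in> C" | "x \<in> C" "y = z" | "x \<in> C" "y \<in> C" by blast
      then show "star_le n k x y \<or> star_le n k y x"
      proof cases
        case 1 then show ?thesis using z(2) by simp
      next
        case 2 then show ?thesis using z(3) by blast
      next
        case 3 then show ?thesis using z(3) by blast
      next
        case 4 then show ?thesis using C unfolding is_chain_def by simp
      qed
    qed
    then have "insert z C = C" using max by blast
    then show ?thesis by blast
  qed
  have idC: "id \<in> C"
  proof (rule ins)
    show "id \<in> sym_group n" by (rule sym_id)
    show "star_le n k id id" using le_id[OF k sym_id] .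
    show "\<forall>c\<in>C. star_le n k c id \<or> star_le n k id c" using le_id[OF k] Csym by blast
  qed
  have img: "?m ` C = {1..n}"
  proof
    show "?m ` C \<subseteq> {1..n}" using num_cycles_ge1[OF n1] num_cycles_le by auto
    show "{1..n} \<subseteq> ?m ` C"
    proof (rule ccontr)
      assume "\<not> {1..n} \<subseteq> ?m ` C"
      then obtain r where r: "r \<in> {1..n}" "r \<notin> ?m ` C" by blast
      have mid: "?m id = n" by (rule num_cycles_id)
      have "r \<noteq> n"
      proof
        assume "r = n" then have "r = ?m id" using mid by simp
        then show False using r(2) idC by blast
      qed
      then have rn: "r < n" using r(1) by simp
      define B where "B = {c \<in> C. r < ?m c}"
      define A where "A = {c \<in> C. ?m c < r}"
      have AB: "c \<in> A \<or> c \<in> B" if "c \<in> C" for c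
      proof -
        have "?m c \<noteq> r" using r(2) that by blast
        then show ?thesis unfolding A_def B_def using that by auto
      qed
      have "id \<in> B" unfolding B_def using idC mid rn by simp
      then have Bne: "B \<noteq> {}" by auto
      have Bfin: "finite B" using fin unfolding B_def by simp
      have "Min (?m ` B) \<in> ?m ` B" using Bfin Bne by simp
      then obtain y where y1: "y \<in> B" "?m y = Min (?m ` B)" by (metis imageE)
      have "\<forall>c\<in>B. ?m y \<le> ?m c" using y1(2) Bfin by simp
      note y = y1(1) this
      have yC: "y \<in> C" using y(1) unfolding B_def by simp
      have ysym: "y \<in> sym_group n" using yC Csym by blast
      show False
      proof (cases "A = {}")
        case True
        obtain c g d where cgd: "is_full_cycle n c" "g \<in> star_facts n k c" "d \<in> star_facts n k y" "subseq g d"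
          using exist_below[OF k ysym] by blast
        have cy: "star_le n k c y" unfolding star_le_def using cgd by blast
        have mc: "?m c = 1" using cgd(1) unfolding is_full_cycle_def by simp
        have "c \<in> C"
        proof (rule ins)
          show "c \<in> sym_group n" using cgd(1) unfolding is_full_cycle_def sym_group_def by simp
          show "star_le n k c c" using refl_l[OF cy] .
          show "\<forall>c'\<in>C. star_le n k c' c \<or> star_le n k c c'"
          proof
            fix c' assume c': "c' \<in> C"
            then have "c' \<in> B" using AB True by blast
            then have "?m y \<le> ?m c'" using y(2) by blast
            then have "star_le n k y c'" using chain_le[OF k C yC c'] by simp
            then show "star_le n k c' c \<or> star_le n k c c'" using star_le_trans[OF k cy] by blast
          qed
        qed
        then have "c \<in> A \<or> c \<in> B" using AB by blast
        moreover have "c \<notin> A" using True by blast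
        moreover have "r \<noteq> 1"
        proof
          assume "r = 1" then have "r = ?m c" using mc by simp
          then show False using r(2) \<open>c \<in> C\<close> by blast
        qed
        ultimately show False using mc r(1) unfolding B_def by auto
      next
        case False
        have Afin: "finite A" using fin unfolding A_def by simp
        have "Max (?m ` A) \<in> ?m ` A" using Afin False by simp
        then obtain x where x1: "x \<in> A" "?m x = Max (?m ` A)" by (metis imageE)
        have "\<forall>c\<in>A. ?m c \<le> ?m x" using x1(2) Afin by simp
        note x = x1(1) this
        have xC: "x \<in> C" using x(1) unfolding A_def by simp
        have mxy: "?m x + 2 \<le> ?m y" using x(1) y(1) unfolding A_def B_def by simp
        have xy: "star_le n k x y" using chain_le[OF k C xC yC] mxy by simp
        obtain z where z: "z \<in> sym_group n" "star_le n k x z" "star_le n k z y" "?m z + 1 = ?m y"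
          using interp[OF k xy mxy] by blast
        have "z \<in> C"
        proof (rule ins)
          show "z \<in> sym_group n" by fact
          show "star_le n k z z" using refl_r[OF z(2)] .
          show "\<forall>c'\<in>C. star_le n k c' z \<or> star_le n k z c'"
          proof
            fix c' assume c': "c' \<in> C"
            then consider "c' \<in> A" | "c' \<in> B" using AB by blast
            then show "star_le n k c' z \<or> star_le n k z c'"
            proof cases
              case 1
              then have "?m c' \<le> ?m x" using x(2) by blast
              then have "star_le n k c' x" using chain_le[OF k C c' xC] by simp
              then show ?thesis using star_le_trans[OF k _ z(2)] by blast
            next
              case 2
              then have "?m y \<le> ?m c'" using y(2) by blast
              then have "star_le n k y c'" using chain_le[OF k C yC c'] by simp
              then show ?thesis using star_le_trans[OF k z(3)] by blast
            qed
          qed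
        qed
        then consider "z \<in> A" | "z \<in> B" using AB by blast
        then show False
        proof cases
          case 1 then have "?m z \<le> ?m x" using x(2) by blast
          then show False using z(4) mxy by simp
        next
          case 2 then have "?m y \<le> ?m z" using y(2) by blast
          then show False using z(4) by simp
        qed
      qed
    qed
  qed
  have "card C = card (?m ` C)" using card_image[OF chain_inj[OF k C]] by simp
  then show ?thesis using img by simp
qed

theorem mainTheorem12:
  fixes n k :: nat
  assumes "n \<ge> 1" and "k \<in> {1..n}"
  shows "is_maximal n k id
       \<and> (\<forall>x. is_maximal n k x \<longrightarrow> x = id)
       \<and> {x. is_minimal n k x} = {x. is_full_cycle n x}
       \<and> card {x. is_minimal n k x} = fact (n - 1)
       \<and> (\<forall>C. is_maximal_chain n k C \<longrightarrow> card C = n)"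
proof -
  have k: "k \<in> {1..n}" by fact
  have P1: "is_maximal n k id"
    unfolding is_maximal_def
  proof (intro conjI ballI impI)
    show "id \<in> sym_group n" by (rule sym_id)
    fix y assume y: "y \<in> sym_group n" "star_le n k id y"
    have "num_cycles n id \<le> num_cycles n y" using rank_le[OF k y(2)] .
    moreover have "num_cycles n y \<le> n" by (rule num_cycles_le)
    ultimately have "num_cycles n id = num_cycles n y" using num_cycles_id by simp
    then show "y = id" using rank_eq[OF k y(2)] by simp
  qed
  have P2: "\<forall>x. is_maximal n k x \<longrightarrow> x = id"
  proof (intro allI impI)
    fix x assume "is_maximal n k x"
    then have x: "x \<in> sym_group n" "\<And>y. y \<in> sym_group n \<Longrightarrow> star_le n k x y \<Longrightarrow> y = x"
      unfolding is_maximal_def by auto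
    have "id = x" using x(2)[OF sym_id le_id[OF k x(1)]] .
    then show "x = id" by simp
  qed
  have P3: "{x. is_minimal n k x} = {x. is_full_cycle n x}"
  proof (rule set_eqI)
    fix x show "x \<in> {x. is_minimal n k x} \<longleftrightarrow> x \<in> {x. is_full_cycle n x}"
    proof
      assume "x \<in> {x. is_minimal n k x}"
      then have x: "x \<in> sym_group n" "\<And>y. y \<in> sym_group n \<Longrightarrow> star_le n k y x \<Longrightarrow> y = x"
        unfolding is_minimal_def by auto
      obtain c g d where cgd: "is_full_cycle n c" "g \<in> star_facts n k c" "d \<in> star_facts n k x" "subseq g d"
        using exist_below[OF k x(1)] by blast
      have "star_le n k c x" unfolding star_le_def using cgd by blast
      moreover have "c \<in> sym_group n" using cgd(1) unfolding is_full_cycle_def sym_group_def by simp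
      ultimately have "c = x" using x(2) by blast
      then show "x \<in> {x. is_full_cycle n x}" using cgd(1) by simp
    next
      assume "x \<in> {x. is_full_cycle n x}"
      then have fc: "x permutes {1..n}" "num_cycles n x = 1" unfolding is_full_cycle_def by auto
      have "is_minimal n k x" unfolding is_minimal_def
      proof (intro conjI ballI impI)
        show "x \<in> sym_group n" using fc(1) by (simp add: sym_group_def)
        fix y assume y: "y \<in> sym_group n" "star_le n k y x"
        have "num_cycles n y \<le> 1" using rank_le[OF k y(2)] fc(2) by simp
        moreover have "1 \<le> num_cycles n y" using num_cycles_ge1 assms(1) by blast
        ultimately show "y = x" using rank_eq[OF k y(2)] fc(2) by simp
      qed
      then show "x \<in> {x. is_minimal n k x}" by simp
    qed
  qed
  have P4: "card {x. is_minimal n k x} = fact (n - 1)"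
  proof -
    let ?P = "permutations_of_set ({1..n} - {k})"
    have img: "{x. is_full_cycle n x} = star_prod k ` ?P"
    proof
      show "{x. is_full_cycle n x} \<subseteq> star_prod k ` ?P"
      proof
        fix c assume "c \<in> {x. is_full_cycle n x}"
        then obtain w where "w \<in> ?P" "star_prod k w = c" using full_surj[OF k] by blast
        then show "c \<in> star_prod k ` ?P" by blast
      qed
      show "star_prod k ` ?P \<subseteq> {x. is_full_cycle n x}" using distinct_full[OF k] by blast
    qed
    have inj: "inj_on (star_prod k) ?P"
    proof (rule inj_onI)
      fix w v assume wv: "w \<in> ?P" "v \<in> ?P" "star_prod k w = star_prod k v"
      have w: "set w = {1..n} - {k}" "distinct w" using permutations_of_setD[OF wv(1)] by auto
      have v: "set v = {1..n} - {k}" "distinct v" using permutations_of_setD[OF wv(2)] by auto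
      have "length w = length v" using distinct_card[OF w(2)] distinct_card[OF v(2)] w(1) v(1) by simp
      moreover have "k \<notin> set w" "k \<notin> set v" using w v by auto
      ultimately show "w = v" using distinct_inj[OF w(2) _ v(2) _ _ wv(3)] by blast
    qed
    have "card {x. is_minimal n k x} = card (star_prod k ` ?P)" using P3 img by simp
    also have "\<dots> = card ?P" using card_image[OF inj] .
    also have "\<dots> = fact (card ({1..n} - {k}))" by simp
    also have "card ({1..n} - {k}) = n - 1" using k by simp
    finally show ?thesis .
  qed
  have P5: "\<forall>C. is_maximal_chain n k C \<longrightarrow> card C = n" using max_chain_card[OF k] by blast
  show ?thesis using P1 P2 P3 P4 P5 by blast
qed

end
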